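(* Let $A\subseteq\mathbf R^{n+1}$ be closed, $x,y\in\partial A$, and $0<r<s/2$. Suppose $u,v\in\mathbf S^n$ satisfy $$B(x-ru,r)\subseteq A,\quad U(x+su,s)\cap A=\varnothing,\quad B(y-rv,r)\subseteq A,\quad U(y+sv,s)\cap A=\varnothing.$$ Then $$|u-v|\le\max\Big\{\frac{2(s-2r)}{r(s-r)},\sqrt{\frac{2}{r(s-r)}}\Big\}\,|x-y|.$$
   Context: $\mathbf R^{n+1}$ carries the Euclidean norm $|\cdot|$; $\mathbf S^n$ is the Euclidean unit sphere; $B(z,t)$ and $U(z,t)$ denote the closed and open Euclidean balls of center $z$ and radius $t$. *)

theory Defs
  imports "HOL-Analysis.Analysis"
begin

end

theory Submission
  imports Defs
begin

lemma sep_balls: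
  fixes a b :: "'a::euclidean_space"
  assumes "cball a r \<subseteq> A" "ball b s \<inter> A = {}" "0 < r" "0 < s"
  shows "r + s \<le> norm (a - b)"
proof (rule ccontr)
  assume h: "\<not> r + s \<le> norm (a - b)"
  define p where "p = a + (r / (r + s)) *\<^sub>R (b - a)"
  have "norm (p - a) = r / (r+s) * norm (b - a)" using assms by (simp add: p_def)
  also have "\<dots> \<le> r / (r+s) * (r+s)" using h assms
    by (intro mult_left_mono) (auto simp: norm_minus_commute)
  also have "\<dots> = r" using assms by simp
  finally have "p \<in> cball a r" by (simp add: dist_norm norm_minus_commute)
  have "p - b = (s / (r+s)) *\<^sub>R (a - b)" using assms
  proof -
    have e: "r/(r+s) + s/(r+s) = 1" using assms by (simp add: add_divide_distrib[symmetric])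
    have "p - b = (1 - r/(r+s)) *\<^sub>R (a - b)" by (simp add: p_def algebra_simps)
    also have "1 - r/(r+s) = s/(r+s)" using e by linarith
    finally show ?thesis .
  qed
  hence "norm (p - b) = s / (r+s) * norm (a - b)" using assms by simp
  also have "\<dots> < s / (r+s) * (r+s)" using h assms
    by (intro mult_strict_left_mono) auto
  also have "\<dots> = s" using assms by simp
  finally have "p \<in> ball b s" by (simp add: dist_norm norm_minus_commute)
  with \<open>p \<in> cball a r\<close> assms show False by blast
qed

lemma expand:
  fixes d u v :: "'a::euclidean_space"
  shows "(norm (d - r *\<^sub>R u - s *\<^sub>R v))^2 = (norm d)^2 + r^2 * (norm u)^2 + s^2 * (norm v)^2
     - 2 * r * inner d u - 2 * s * inner d v + 2 * r * s * inner u v"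
  unfolding power2_norm_eq_inner
  by (simp add: inner_diff_left inner_diff_right inner_add_left inner_add_right inner_commute algebra_simps power2_eq_square)

theorem lemma2p12:
  fixes A :: "'a::euclidean_space set" and x y u v :: 'a and r s :: real
  assumes "closed A"
    and "x \<in> frontier A" and "y \<in> frontier A"
    and "0 < r" and "r < s / 2"
    and "norm u = 1" and "norm v = 1"
    and "cball (x - r *\<^sub>R u) r \<subseteq> A"
    and "ball (x + s *\<^sub>R u) s \<inter> A = {}"
    and "cball (y - r *\<^sub>R v) r \<subseteq> A"
    and "ball (y + s *\<^sub>R v) s \<inter> A = {}"
  shows "norm (u - v) \<le> max (2 * (s - 2 * r) / (r * (s - r))) (sqrt (2 / (r * (s - r)))) * norm (x - y)"
proof -
  have s0: "0 < s" using assms by simp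
  define d where "d = x - y"
  have h1: "r + s \<le> norm (d - r *\<^sub>R u - s *\<^sub>R v)"
    using sep_balls[OF assms(8) assms(11) assms(4) s0] by (simp add: d_def algebra_simps)
  have h2: "r + s \<le> norm ((-d) - r *\<^sub>R v - s *\<^sub>R u)"
    using sep_balls[OF assms(10) assms(9) assms(4) s0] by (simp add: d_def algebra_simps)
  have q1: "(r+s)^2 \<le> (norm (d - r *\<^sub>R u - s *\<^sub>R v))^2"
    using h1 assms(4) s0 by (intro power_mono) auto
  have q2: "(r+s)^2 \<le> (norm ((-d) - r *\<^sub>R v - s *\<^sub>R u))^2"
    using h2 assms(4) s0 by (intro power_mono) auto
  have uv: "(norm (u - v))^2 = 2 - 2 * inner u v"
    using assms(6,7) by (simp add: norm_eq_1 power2_norm_eq_inner inner_diff_left inner_diff_right inner_commute)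
  have duv: "inner d (u - v) = inner d u - inner d v" by (simp add: inner_diff_right)
  have key: "r * s * (norm (u-v))^2 \<le> (norm d)^2 + (s-r) * inner d (u - v)"
  proof -
    have e1: "(r+s)^2 \<le> (norm d)^2 + r^2 + s^2 - 2 * r * inner d u - 2 * s * inner d v + 2 * r * s * inner u v"
      using q1 unfolding expand using assms(6,7) by simp
    have e2: "(r+s)^2 \<le> (norm d)^2 + r^2 + s^2 + 2 * r * inner d v + 2 * s * inner d u + 2 * r * s * inner u v"
      using q2 unfolding expand using assms(6,7) by (simp add: inner_commute)
    have e3: "r * s * (norm (u-v))^2 = 2 * r * s - 2 * r * s * inner u v" by (subst uv) (simp add: algebra_simps)
    have e4: "(s-r) * inner d (u - v) = s * inner d u - s * inner d v - r * inner d u + r * inner d v"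
      using duv by (simp add: algebra_simps)
    have e5: "(r+s)^2 = r^2 + s^2 + 2 * r * s" by (simp add: power2_eq_square algebra_simps)
    show ?thesis using e1 e2 e3 e4 e5 by linarith
  qed
  have cs: "inner d (u - v) \<le> norm d * norm (u - v)" by (rule norm_cauchy_schwarz)
  have "(s-r) * inner d (u - v) \<le> (s-r) * (norm d * norm (u - v))"
    using cs assms by (intro mult_left_mono) auto
  moreover have "(r * norm (u-v) - norm d) * (s * norm (u-v) + norm d)
     = r * s * (norm (u-v))^2 - ((norm d)^2 + (s-r) * (norm d * norm (u - v)))"
    by (simp add: algebra_simps power2_eq_square)
  ultimately have k2: "(r * norm (u-v) - norm d) * (s * norm (u-v) + norm d) \<le> 0"
    using key by linarith
  have main: "r * norm (u - v) \<le> norm d"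
  proof (cases "s * norm (u-v) + norm d = 0")
    case True
    have "s * norm (u-v) \<ge> 0" using s0 by simp
    then have "norm d = 0" "s * norm (u-v) = 0" using True norm_ge_zero[of d] by linarith+
    then show ?thesis using s0 by simp
  next
    case False
    have "s * norm (u-v) \<ge> 0" using s0 by simp
    hence "s * norm (u-v) + norm d > 0" using False norm_ge_zero[of d] by linarith
    with k2 have "r * norm (u-v) - norm d \<le> 0" by (simp add: mult_le_0_iff)
    then show ?thesis by simp
  qed
  have M: "1 / r \<le> max (2 * (s - 2 * r) / (r * (s - r))) (sqrt (2 / (r * (s - r))))"
  proof (cases "3 * r \<le> s")
    case True
    have "1 / r \<le> 2 * (s - 2 * r) / (r * (s - r))"
      using True assms by (simp add: divide_simps)
    then show ?thesis by simp
  next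
    case False
    have "1 / r = sqrt ((1/r)^2)" using assms by simp
    also have "\<dots> \<le> sqrt (2 / (r * (s - r)))"
      using False assms by (intro real_sqrt_le_mono) (simp add: divide_simps power2_eq_square)
    finally show ?thesis by simp
  qed
  have "norm (u - v) \<le> (1/r) * norm d" using main assms(4) by (simp add: divide_simps mult.commute)
  also have "\<dots> \<le> max (2 * (s - 2 * r) / (r * (s - r))) (sqrt (2 / (r * (s - r)))) * norm d"
    using M by (intro mult_right_mono) auto
  finally show ?thesis by (simp add: d_def)
qed

end
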